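(* Under the assumptions of Lemma lem:Y (Hypothesis (N1), one of (S1), (S2), (S3), initial datum $x\in\mathbb R^n_+\setminus\{0\}$, no extraction), the solution of $X'(t)=\varphi(\langle\mathbf e,X(t)\rangle)X(t)+(D+B^\top)X(t)$, $X(0)=x$, satisfies $$\lim_{t\to\infty}X(t)=\bar m\,\langle\mathbf e,\zeta\rangle^{-1}\zeta,$$ where $\bar m$ is $K^{\frac1{\sigma-1}}$ under (S1), $\delta^{\frac1{\sigma-1}}$ under (S2), $e^K$ under (S3); in particular the limit lies in $\{x\in\mathbb R^n: x_1+\dots+x_n=\bar m,\ x_i\ge0\}$.
   Context: Let $n\ge 2$, $N=\{1,\dots,n\}$, $\mathbf e=(1,\dots,1)^\top$, $\langle\cdot,\cdot\rangle$ the Euclidean inner product; $\mathbb R^n_+=\{x: x_i\ge0\ \forall i\}$. Hypothesis (N1): $B=(b_{ij})$ is a real $n\times n$ matrix with $b_{ij}\ge0$, $b_{ii}=0$ ($b_{ij}X_i$ is the flow from node $i$ to node $j$), and the directed graph with an edge $i\to j$ iff $b_{ij}>0$ is strongly connected; $D$ is the diagonal matrix with $D_{ii}=-\sum_{j\ne i}b_{ij}$. $\zeta$ denotes a vector with all coordinates strictly positive spanning the kernel of $D+B^\top$. Parameters $\Gamma>0$, $K>0$, $\delta>0$. Growth specifications: (S1) $\sigma>1$, $\varphi(m)=\Gamma(1-\frac1K m^{\sigma-1})$; (S2) $0<\sigma<1$, $\varphi(m)=m^{\sigma-1}-\delta$; (S3) $\varphi(m)=\Gamma(1-\frac1K\ln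 m)$. *)

theory Defs
  imports "HOL-Analysis.Analysis"
begin

definition flow_edges :: "real^'n^'n \<Rightarrow> ('n \<times> 'n) set" where
  "flow_edges B = {(i, j). B $ i $ j > 0}"

definition hypN1 :: "real^'n^'n \<Rightarrow> bool" where
  "hypN1 B \<longleftrightarrow> (\<forall>i j. B $ i $ j \<ge> 0) \<and> (\<forall>i. B $ i $ i = 0)
     \<and> (\<forall>i j. (i, j) \<in> (flow_edges B)\<^sup>*)"

definition diagD :: "real^'n^'n \<Rightarrow> real^'n^'n" where
  "diagD B = (\<chi> i j. if i = j then - (\<Sum>k\<in>UNIV - {i}. B $ i $ k) else 0)"

end

theory Submission
  imports Defs "HOL-Real_Asymp.Real_Asymp"
begin


lemma der_cont:
  fixes f f' :: "real \<Rightarrow> real"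
  assumes der: "\<forall>t\<ge>0. (f has_real_derivative f' t) (at t within {0..})"
  shows "continuous_on {0..} f"
  using der by (intro continuous_on_vector_derivative)
    (auto simp: has_real_derivative_iff_has_vector_derivative)

lemma der_at:
  fixes f f' :: "real \<Rightarrow> real"
  assumes der: "\<forall>t\<ge>0. (f has_real_derivative f' t) (at t within {0..})"
    and t: "t > 0"
  shows "(f has_real_derivative f' t) (at t)"
proof -
  have "t \<in> interior {0..}" using t interior_Ici[of "-1::real" 0] by simp
  then have "at t within {0..} = at t" by (rule at_within_interior)
  with der t show ?thesis by (metis less_imp_le)
qed

lemma der_mono_le:
  fixes f f' :: "real \<Rightarrow> real"
  assumes der: "\<forall>t\<ge>0. (f has_real_derivative f' t) (at t within {0..})"
    and ab: "0 \<le> a" "a \<le> b" and neg: "\<And>t. a < t \<Longrightarrow> t < b \<Longrightarrow> f' t \<le> 0"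
  shows "f b \<le> f a"
proof (rule DERIV_nonpos_imp_decreasing_open[OF ab(2)])
  show "continuous_on {a..b} f"
    by (rule continuous_on_subset[OF der_cont[OF der]]) (use ab in auto)
  fix x assume "a < x" "x < b"
  then show "\<exists>y. (f has_real_derivative y) (at x) \<and> y \<le> 0"
    using der_at[OF der, of x] neg ab by (intro exI[of _ "f' x"]) auto
qed

lemma der_mono_ge:
  fixes f f' :: "real \<Rightarrow> real"
  assumes der: "\<forall>t\<ge>0. (f has_real_derivative f' t) (at t within {0..})"
    and ab: "0 \<le> a" "a \<le> b" and pos: "\<And>t. a < t \<Longrightarrow> t < b \<Longrightarrow> f' t \<ge> 0"
  shows "f a \<le> f b"
proof (rule DERIV_nonneg_imp_increasing_open[OF ab(2)])
  show "continuous_on {a..b} f"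
    by (rule continuous_on_subset[OF der_cont[OF der]]) (use ab in auto)
  fix x assume "a < x" "x < b"
  then show "\<exists>y. (f has_real_derivative y) (at x) \<and> y \<ge> 0"
    using der_at[OF der, of x] pos ab by (intro exI[of _ "f' x"]) auto
qed

lemma barrier:
  fixes f f' :: "real \<Rightarrow> real"
  assumes der: "\<forall>t\<ge>0. (f has_real_derivative f' t) (at t within {0..})"
    and sT: "0 \<le> s" "s \<le> T" and fs: "f s \<le> c" and eta: "\<eta> > 0"
    and neg: "\<And>t. s < t \<Longrightarrow> c < f t \<Longrightarrow> f t < c + \<eta> \<Longrightarrow> f' t \<le> 0"
  shows "f T \<le> c"
proof (rule ccontr)
  assume "\<not> f T \<le> c"
  then have fT: "f T > c" by simp
  define d where "d = min (f T) (c + \<eta>/2)"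
  have d: "c < d" "d \<le> f T" "d < c + \<eta>" using fT eta by (auto simp: d_def)
  have cont: "continuous_on {s..T} f"
    by (rule continuous_on_subset[OF der_cont[OF der]]) (use sT in auto)
  define S where "S = {t \<in> {s..T}. d \<le> f t}"
  have "closed S" unfolding S_def
    by (rule continuous_on_closed_Collect_le[OF continuous_on_const cont]) simp
  then have "compact S" unfolding compact_eq_bounded_closed by (auto intro: bounded_subset[of "{s..T}"] simp: S_def)
  moreover have "T \<in> S" using d sT by (auto simp: S_def)
  ultimately obtain r1 where r1: "r1 \<in> S" "\<And>y. y \<in> S \<Longrightarrow> r1 \<le> y"
    using continuous_attains_inf[of S "\<lambda>x. x"] by (auto intro: continuous_on_id)
  have r1s: "s < r1" using r1(1) fs d by (auto simp: S_def less_le)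
  have below: "f t < d" if "s \<le> t" "t < r1" for t
    using r1(2)[of t] that r1(1) by (force simp: S_def)
  define R where "R = {t \<in> {s..r1}. f t \<le> c}"
  have cont2: "continuous_on {s..r1} f"
    by (rule continuous_on_subset[OF cont]) (use r1(1) in \<open>auto simp: S_def\<close>)
  have "closed R" unfolding R_def
    by (rule continuous_on_closed_Collect_le[OF cont2 continuous_on_const]) simp
  then have "compact R" unfolding compact_eq_bounded_closed by (auto intro: bounded_subset[of "{s..r1}"] simp: R_def)
  moreover have "s \<in> R" using fs r1s by (auto simp: R_def)
  ultimately obtain r0 where r0: "r0 \<in> R" "\<And>y. y \<in> R \<Longrightarrow> y \<le> r0"
    using continuous_attains_sup[of R "\<lambda>x. x"] by (auto intro: continuous_on_id)
  have r0r1: "r0 < r1" using r0(1) r1(1) d by (auto simp: R_def S_def less_le)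
  have "f r1 \<le> f r0"
  proof (rule der_mono_le[OF der])
    show "0 \<le> r0" using r0(1) sT by (auto simp: R_def)
    show "r0 \<le> r1" using r0r1 by simp
    fix t assume t: "r0 < t" "t < r1"
    have "s \<le> t" using t r0(1) by (auto simp: R_def)
    have "f t > c" using r0(2)[of t] t \<open>s \<le> t\<close> by (force simp: R_def)
    moreover have "f t < c + \<eta>" using below[OF \<open>s \<le> t\<close> t(2)] d by simp
    moreover have "s < t" using t r0(1) by (auto simp: R_def)
    ultimately show "f' t \<le> 0" using neg by blast
  qed
  moreover have "f r0 \<le> c" using r0(1) by (simp add: R_def)
  moreover have "d \<le> f r1" using r1(1) by (simp add: S_def)
  ultimately show False using d by simp
qed



lemma scalar_conv:
  fixes M g :: "real \<Rightarrow> real" and mbar :: real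
  assumes mb: "mbar > 0" and M0: "M 0 > 0" and gc: "continuous_on {0<..} g"
    and gpos: "\<And>m. 0 < m \<Longrightarrow> m < mbar \<Longrightarrow> g m > 0"
    and gneg: "\<And>m. mbar < m \<Longrightarrow> g m < 0"
    and der: "\<forall>t\<ge>0. (M has_real_derivative g (M t)) (at t within {0..})"
  shows "(\<forall>t\<ge>0. M t > 0) \<and> (M \<longlongrightarrow> mbar) at_top"
proof -
  define a where "a = min (M 0) mbar"
  define b where "b = max (M 0) mbar"
  have a0: "a > 0" using mb M0 by (simp add: a_def)
  have derm: "\<forall>t\<ge>0. ((\<lambda>t. - M t) has_real_derivative - g (M t)) (at t within {0..})"
    using der by (auto intro: DERIV_minus)
  have upper_from: "M t \<le> c" if "0 \<le> s" "s \<le> t" "M s \<le> c" "mbar \<le> c" for s t c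
  proof (rule barrier[OF der that(1,2,3), of 1])
    fix t' assume "c < M t'"
    then show "g (M t') \<le> 0" using gneg[of "M t'"] that(4) by simp
  qed simp
  have lower_from: "c \<le> M t" if "0 \<le> s" "s \<le> t" "c \<le> M s" "c \<le> mbar" "0 < c" for s t c
  proof -
    have "- M t \<le> - c"
    proof (rule barrier[OF derm that(1,2), of "-c" "c/2"])
      show "- M s \<le> - c" using that by simp
      show "0 < c/2" using that by simp
      fix t' assume "- c < - M t'" "- M t' < - c + c / 2"
      then show "- g (M t') \<le> 0" using gpos[of "M t'"] that by force
    qed
    then show ?thesis by simp
  qed
  have lo: "a \<le> M t" if "t \<ge> 0" for t
    using lower_from[of 0 t a] that a0 by (auto simp: a_def)
  have hi: "M t \<le> b" if "t \<ge> 0" for t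
    using upper_from[of 0 t b] that by (auto simp: b_def)
  have reach: "\<exists>s\<ge>0. \<bar>M s - mbar\<bar> < \<epsilon>" if eps: "0 < \<epsilon>" for \<epsilon>
  proof (rule ccontr)
    assume "\<not> ?thesis"
    then have H: "\<And>t. t \<ge> 0 \<Longrightarrow> \<bar>M t - mbar\<bar> \<ge> \<epsilon>" by force
    have cM: "continuous_on {0..t} M" for t
      by (rule continuous_on_subset[OF der_cont[OF der]]) auto
    consider "M 0 < mbar" | "M 0 > mbar" | "M 0 = mbar" by linarith
    then show False
    proof cases
      case 1
      have below: "M t \<le> mbar - \<epsilon>" if t: "t \<ge> 0" for t
      proof (rule ccontr)
        assume "\<not> ?thesis"
        then have "M t \<ge> mbar" using H[OF t] by linarith
        moreover have "M 0 \<le> mbar" using 1 by simp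
        ultimately obtain x where "0 \<le> x" "x \<le> t" "M x = mbar"
          using IVT'[of M 0 mbar t, OF _ _ t cM] by auto
        then show False using H[of x] eps by simp
      qed
      have ab: "a \<le> mbar - \<epsilon>" using below[of 0] by (simp add: a_def)
      have "continuous_on {a..mbar - \<epsilon>} g"
        by (rule continuous_on_subset[OF gc]) (use a0 in auto)
      then obtain x0 where x0: "x0 \<in> {a..mbar-\<epsilon>}" "\<And>y. y \<in> {a..mbar-\<epsilon>} \<Longrightarrow> g x0 \<le> g y"
        using continuous_attains_inf[of "{a..mbar-\<epsilon>}" g] ab by auto
      define \<kappa> where "\<kappa> = g x0"
      have k0: "\<kappa> > 0" unfolding \<kappa>_def using x0(1) a0 eps by (intro gpos) auto
      have derh: "\<forall>t\<ge>0. ((\<lambda>t. M t - \<kappa> * t) has_real_derivative g (M t) - \<kappa>) (at t within {0..})"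
        using der by (auto intro!: derivative_eq_intros)
      define T where "T = (b - M 0 + 1) / \<kappa>"
      have T0: "T \<ge> 0" using k0 by (simp add: T_def b_def)
      have "M 0 - \<kappa> * 0 \<le> M T - \<kappa> * T"
      proof (rule der_mono_ge[OF derh order_refl T0])
        fix t assume "0 < t" "t < T"
        then show "0 \<le> g (M t) - \<kappa>" using x0(2)[of "M t"] lo[of t] below[of t]
          by (simp add: \<kappa>_def)
      qed
      then have "M T \<ge> b + 1" using k0 by (simp add: T_def)
      then show False using hi[OF T0] by simp
    next
      case 2
      have above: "M t \<ge> mbar + \<epsilon>" if t: "t \<ge> 0" for t
      proof (rule ccontr)
        assume "\<not> ?thesis"
        then have "M t \<le> mbar" using H[OF t] by linarith
        moreover have "M 0 \<ge> mbar" using 2 by simp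
        ultimately obtain x where "0 \<le> x" "x \<le> t" "M x = mbar"
          using IVT2'[of M t mbar 0, OF _ _ t cM] by auto
        then show False using H[of x] eps by simp
      qed
      have ab: "mbar + \<epsilon> \<le> b" using above[of 0] by (simp add: b_def)
      have "continuous_on {mbar + \<epsilon>..b} g"
        by (rule continuous_on_subset[OF gc]) (use mb eps in auto)
      then obtain x0 where x0: "x0 \<in> {mbar + \<epsilon>..b}" "\<And>y. y \<in> {mbar + \<epsilon>..b} \<Longrightarrow> g y \<le> g x0"
        using continuous_attains_sup[of "{mbar + \<epsilon>..b}" g] ab by auto
      define \<kappa> where "\<kappa> = - g x0"
      have k0: "\<kappa> > 0" unfolding \<kappa>_def using x0(1) eps gneg[of x0] by auto
      have derh: "\<forall>t\<ge>0. ((\<lambda>t. M t + \<kappa> * t) has_real_derivative g (M t) + \<kappa>) (at t within {0..})"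
        using der by (auto intro!: derivative_eq_intros)
      define T where "T = (M 0 - a + 1) / \<kappa>"
      have T0: "T \<ge> 0" using k0 by (simp add: T_def a_def)
      have "M T + \<kappa> * T \<le> M 0 + \<kappa> * 0"
      proof (rule der_mono_le[OF derh order_refl T0])
        fix t assume "0 < t" "t < T"
        then show "g (M t) + \<kappa> \<le> 0" using x0(2)[of "M t"] hi[of t] above[of t]
          by (simp add: \<kappa>_def)
      qed
      then have "M T \<le> a - 1" using k0 by (simp add: T_def)
      then show False using lo[OF T0] by simp
    next
      case 3
      then show False using H[of 0] eps by simp
    qed
  qed
  have "(M \<longlongrightarrow> mbar) at_top"
  proof (rule tendstoI)
    fix e :: real assume e: "e > 0"
    define \<epsilon> where "\<epsilon> = min (e/2) (mbar/2)"
    have eps: "0 < \<epsilon>" "\<epsilon> < e" "\<epsilon> < mbar" using e mb by (auto simp: \<epsilon>_def)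
    obtain s where s: "s \<ge> 0" "\<bar>M s - mbar\<bar> < \<epsilon>" using reach[OF eps(1)] by auto
    have "\<bar>M t - mbar\<bar> \<le> \<epsilon>" if "t \<ge> s" for t
    proof -
      have "M t \<le> mbar + \<epsilon>" using upper_from[of s t "mbar + \<epsilon>"] s that eps by simp
      moreover have "mbar - \<epsilon> \<le> M t" using lower_from[of s t "mbar - \<epsilon>"] s that eps by simp
      ultimately show ?thesis by simp
    qed
    then show "\<forall>\<^sub>F x in at_top. dist (M x) mbar < e"
      using eps unfolding eventually_at_top_linorder dist_real_def
      by (intro exI[of _ s]) (auto intro: le_less_trans)
  qed
  moreover have "\<forall>t\<ge>0. M t > 0" using lo a0 by (auto intro: less_le_trans)
  ultimately show ?thesis by simp
qed



lemma Av_comp: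
  fixes B :: "real^'n^'n" and v :: "real^'n"
  assumes diag: "\<forall>i. B $ i $ i = 0"
  shows "((diagD B + transpose B) *v v) $ i = (\<Sum>j\<in>UNIV. B$j$i * v$j) - (\<Sum>k\<in>UNIV. B$i$k) * v$i"
proof -
  have "(\<Sum>k\<in>UNIV - {i}. B $ i $ k) = (\<Sum>k\<in>UNIV. B$i$k)"
    using diag by (intro sum.mono_neutral_left) auto
  moreover have "((diagD B + transpose B) *v v) $ i
      = (\<Sum>j\<in>UNIV. B$j$i * v$j - (if j = i then (\<Sum>k\<in>UNIV - {i}. B $ i $ k) * v$j else 0))"
    unfolding matrix_vector_mult_def diagD_def transpose_def
    by (simp, intro sum.cong refl) (auto simp: diag algebra_simps)
  ultimately show ?thesis
    by (simp add: sum_subtractf)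
qed

lemma colsum_zero:
  fixes B :: "real^'n^'n" and v :: "real^'n"
  assumes diag: "\<forall>i. B $ i $ i = 0"
  shows "(\<Sum>i\<in>UNIV. ((diagD B + transpose B) *v v) $ i) = 0"
proof -
  have "(\<Sum>i\<in>UNIV. (\<Sum>j\<in>UNIV. B$j$i * v$j)) = (\<Sum>j\<in>UNIV. (\<Sum>i\<in>UNIV. B$j$i) * v$j)"
    by (subst sum.swap) (simp add: sum_distrib_right)
  then show ?thesis by (simp add: Av_comp[OF diag] sum_subtractf)
qed

definition Vf :: "real^'n \<Rightarrow> real^'n \<Rightarrow> real" where
  "Vf \<zeta> z = (\<Sum>i\<in>UNIV. (z$i)^2 / \<zeta>$i)"

definition Qf :: "real^'n^'n \<Rightarrow> real^'n \<Rightarrow> real^'n \<Rightarrow> real" where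
  "Qf B \<zeta> z = (\<Sum>i\<in>UNIV. \<Sum>j\<in>UNIV. B$j$i * \<zeta>$j * (z$i/\<zeta>$i - z$j/\<zeta>$j)^2)"

lemma lyap_identity:
  fixes B :: "real^'n^'n" and \<zeta> z :: "real^'n"
  assumes diag: "\<forall>i. B $ i $ i = 0" and zpos: "\<forall>i. \<zeta> $ i > 0"
    and ker: "(diagD B + transpose B) *v \<zeta> = 0"
  shows "2 * (\<Sum>i\<in>UNIV. z$i * ((diagD B + transpose B) *v z)$i / \<zeta>$i) = - Qf B \<zeta> z"
proof -
  define u where "u i = z$i / \<zeta>$i" for i
  define out where "out i = (\<Sum>k\<in>UNIV. B$i$k)" for i
  have zu: "z$i = \<zeta>$i * u i" for i using zpos[rule_format, of i] by (simp add: u_def)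
  have bal: "(\<Sum>j\<in>UNIV. B$j$i * \<zeta>$j) = out i * \<zeta>$i" for i
    using arg_cong[OF ker, of "\<lambda>w. w $ i"] by (simp add: Av_comp[OF diag] out_def)
  define X where "X = (\<Sum>i\<in>UNIV. \<Sum>j\<in>UNIV. B$j$i * \<zeta>$j * u i * u j)"
  have L: "(\<Sum>i\<in>UNIV. z$i * ((diagD B + transpose B) *v z)$i / \<zeta>$i)
        = X - (\<Sum>i\<in>UNIV. out i * \<zeta>$i * (u i)^2)"
  proof -
    have "(\<Sum>i\<in>UNIV. z$i * ((diagD B + transpose B) *v z)$i / \<zeta>$i)
        = (\<Sum>i\<in>UNIV. u i * ((\<Sum>j\<in>UNIV. B$j$i * \<zeta>$j * u j) - out i * \<zeta>$i * u i))"
    proof (intro sum.cong refl)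
      fix i
      have "\<zeta>$i > 0" using zpos by simp
      then show "z$i * ((diagD B + transpose B) *v z)$i / \<zeta>$i
        = u i * ((\<Sum>j\<in>UNIV. B$j$i * \<zeta>$j * u j) - out i * \<zeta>$i * u i)"
        by (simp add: Av_comp[OF diag] zu out_def field_simps mult.assoc)
    qed
    also have "\<dots> = X - (\<Sum>i\<in>UNIV. out i * \<zeta>$i * (u i)^2)"
      by (simp add: X_def sum_subtractf sum_distrib_left algebra_simps power2_eq_square)
    finally show ?thesis .
  qed
  have "Qf B \<zeta> z = (\<Sum>i\<in>UNIV. \<Sum>j\<in>UNIV. B$j$i * \<zeta>$j * (u i)^2 + B$j$i * \<zeta>$j * (u j)^2
         - 2 * (B$j$i * \<zeta>$j * u i * u j))"
    unfolding Qf_def u_def[symmetric] by (intro sum.cong refl) (simp add: power2_diff algebra_simps)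
  also have "\<dots> = (\<Sum>i\<in>UNIV. (\<Sum>j\<in>UNIV. B$j$i * \<zeta>$j) * (u i)^2)
       + (\<Sum>i\<in>UNIV. \<Sum>j\<in>UNIV. B$j$i * \<zeta>$j * (u j)^2) - 2 * X"
    by (simp add: X_def sum.distrib sum_subtractf sum_distrib_left sum_distrib_right)
  also have "(\<Sum>i\<in>UNIV. \<Sum>j\<in>UNIV. B$j$i * \<zeta>$j * (u j)^2) = (\<Sum>j\<in>UNIV. out j * \<zeta>$j * (u j)^2)"
    by (subst sum.swap) (simp add: out_def sum_distrib_right)
  finally have "Qf B \<zeta> z = 2 * (\<Sum>i\<in>UNIV. out i * \<zeta>$i * (u i)^2) - 2 * X"
    by (simp add: bal)
  with L show ?thesis by simp
qed



lemma Q_nonneg: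
  assumes "hypN1 B" "\<forall>i. \<zeta> $ i > 0"
  shows "0 \<le> Qf B \<zeta> z"
  using assms unfolding Qf_def hypN1_def
  by (intro sum_nonneg mult_nonneg_nonneg zero_le_power2) (auto intro: less_imp_le)

lemma Q_pos:
  fixes B :: "real^'n^'n" and \<zeta> z :: "real^'n"
  assumes N1: "hypN1 B" and zpos: "\<forall>i. \<zeta> $ i > 0"
    and z0: "z \<noteq> 0" and zs: "(\<Sum>i\<in>UNIV. z$i) = 0"
  shows "Qf B \<zeta> z > 0"
proof (rule ccontr)
  assume "\<not> ?thesis"
  then have Q0: "Qf B \<zeta> z = 0" using Q_nonneg[OF N1 zpos, of z] by simp
  define u where "u i = z$i / \<zeta>$i" for i
  have nn: "\<forall>i j. B$i$j \<ge> 0" using N1 by (simp add: hypN1_def)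
  have zle: "\<forall>i. 0 \<le> \<zeta>$i" using zpos by (auto intro: less_imp_le)
  have inner0: "(\<Sum>j\<in>UNIV. B$j$i * \<zeta>$j * (u i - u j)^2) = 0" for i
  proof -
    have "\<forall>i\<in>UNIV. (\<Sum>j\<in>UNIV. B$j$i * \<zeta>$j * (u i - u j)^2) = 0"
      using Q0 unfolding Qf_def u_def[symmetric]
      by (subst (asm) sum_nonneg_eq_0_iff) (auto intro!: sum_nonneg mult_nonneg_nonneg zero_le_power2 simp: nn zle)
    then show ?thesis by simp
  qed
  have edge: "u a = u b" if "B$a$b > 0" for a b
  proof -
    have "\<forall>j\<in>UNIV. B$j$b * \<zeta>$j * (u b - u j)^2 = 0"
      using inner0[of b]
      by (subst (asm) sum_nonneg_eq_0_iff) (auto intro!: mult_nonneg_nonneg zero_le_power2 simp: nn zle)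
    then have "B$a$b * \<zeta>$a * (u b - u a)^2 = 0" by simp
    then show ?thesis using that zpos[rule_format, of a] by simp
  qed
  have path: "u a = u b" if "(a, b) \<in> (flow_edges B)\<^sup>*" for a b
    using that
  proof (induction rule: rtrancl_induct)
    case (step y w)
    then show ?case using edge[of y w] by (simp add: flow_edges_def)
  qed simp
  obtain k :: 'n where True by simp
  have allk: "u i = u k" for i using path[of i k] N1 by (simp add: hypN1_def)
  have zeq: "z$i = u k * \<zeta>$i" for i
    using allk[of i] zpos[rule_format, of i] by (simp add: u_def field_simps)
  have "(\<Sum>i\<in>UNIV. z$i) = u k * (\<Sum>i\<in>UNIV. \<zeta>$i)" by (simp add: zeq sum_distrib_left)
  moreover have "(\<Sum>i\<in>UNIV. \<zeta>$i) > 0" using zpos by (intro sum_pos) auto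
  ultimately have "u k = 0" using zs by simp
  then have "z = 0" using zeq by (simp add: vec_eq_iff)
  with z0 show False by simp
qed

lemma Q_homog: "Qf B \<zeta> (r *\<^sub>R z) = r^2 * Qf B \<zeta> z"
  unfolding Qf_def sum_distrib_left
proof (intro sum.cong refl)
  fix i j
  have "r * z$i / \<zeta>$i - r * z$j / \<zeta>$j = r * (z$i / \<zeta>$i - z$j / \<zeta>$j)"
    by (simp add: right_diff_distrib)
  then show "B $ j $ i * \<zeta> $ j * ((r *\<^sub>R z) $ i / \<zeta> $ i - (r *\<^sub>R z) $ j / \<zeta> $ j)\<^sup>2 =
         r\<^sup>2 * (B $ j $ i * \<zeta> $ j * (z $ i / \<zeta> $ i - z $ j / \<zeta> $ j)\<^sup>2)"
    by (simp add: power_mult_distrib)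
qed

lemma Q_cont: "\<forall>i. \<zeta> $ i > 0 \<Longrightarrow> continuous_on S (Qf B \<zeta>)"
  unfolding Qf_def by (intro continuous_intros) (auto simp: less_imp_neq[symmetric])

lemma V_bound:
  assumes zpos: "\<forall>i. \<zeta> $ i > 0"
  shows "Vf \<zeta> z \<le> (\<Sum>i\<in>UNIV. 1 / \<zeta>$i) * (norm z)^2"
  unfolding Vf_def sum_distrib_right
proof (intro sum_mono)
  fix i
  have "(z$i)^2 \<le> (norm z)^2"
    using component_le_norm_cart[of z i] by (metis abs_le_square_iff abs_norm_cancel)
  then show "(z$i)^2 / \<zeta>$i \<le> 1 / \<zeta>$i * (norm z)^2"
    using zpos[rule_format, of i] by (simp add: divide_right_mono)
qed

lemma Q_coercive:
  fixes B :: "real^'n^'n" and \<zeta> :: "real^'n"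
  assumes N1: "hypN1 B" and zpos: "\<forall>i. \<zeta> $ i > 0"
  shows "\<exists>c>0. \<forall>z. (\<Sum>i\<in>UNIV. z$i) = 0 \<longrightarrow> c * Vf \<zeta> z \<le> Qf B \<zeta> z"
proof -
  define S where "S = sphere (0::real^'n) 1 \<inter> {z. (\<Sum>i\<in>UNIV. z$i) = 0}"
  define C where "C = (\<Sum>i\<in>UNIV. 1 / \<zeta>$i)"
  have C0: "C > 0" unfolding C_def using zpos by (intro sum_pos) auto
  show ?thesis
  proof (cases "S = {}")
    case True
    have zero: "z = 0" if "(\<Sum>i\<in>UNIV. z$i) = 0" for z :: "real^'n"
    proof (rule ccontr)
      assume "z \<noteq> 0"
      then have "(1 / norm z) *\<^sub>R z \<in> S" using that
        by (simp add: S_def sum_divide_distrib[symmetric])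
      with True show False by simp
    qed
    have "Vf \<zeta> z = 0" if "(\<Sum>i\<in>UNIV. z$i) = 0" for z
      using zero[OF that] by (simp add: Vf_def)
    then show ?thesis using Q_nonneg[OF N1 zpos] by (intro exI[of _ 1]) simp
  next
    case False
    have "closed {z::real^'n. (\<Sum>i\<in>UNIV. z$i) = 0}"
      by (intro closed_Collect_eq continuous_intros)
    then have "compact S" unfolding S_def by (intro compact_Int_closed compact_sphere)
    then obtain z0 where z0: "z0 \<in> S" "\<And>y. y \<in> S \<Longrightarrow> Qf B \<zeta> z0 \<le> Qf B \<zeta> y"
      using continuous_attains_inf[OF _ False Q_cont[OF zpos]] by blast
    define c0 where "c0 = Qf B \<zeta> z0"
    have c0: "c0 > 0" unfolding c0_def using z0(1)
      by (intro Q_pos[OF N1 zpos]) (auto simp: S_def)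
    have "c0 / C * Vf \<zeta> z \<le> Qf B \<zeta> z" if zs: "(\<Sum>i\<in>UNIV. z$i) = 0" for z
    proof (cases "z = 0")
      case True then show ?thesis by (simp add: Vf_def Qf_def)
    next
      case False
      define w where "w = (1 / norm z) *\<^sub>R z"
      have "w \<in> S" using False zs by (simp add: S_def w_def sum_divide_distrib[symmetric])
      then have "c0 \<le> Qf B \<zeta> w" using z0(2) c0_def by simp
      moreover have "z = norm z *\<^sub>R w" using False by (simp add: w_def)
      then have "Qf B \<zeta> z = (norm z)^2 * Qf B \<zeta> w" by (metis Q_homog)
      ultimately have "c0 * (norm z)^2 \<le> Qf B \<zeta> z"
        by (simp add: mult.commute mult_right_mono)
      moreover have "c0 / C * Vf \<zeta> z \<le> c0 / C * (C * (norm z)^2)"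
        using V_bound[OF zpos, of z] c0 C0 by (intro mult_left_mono) (auto simp: C_def)
      ultimately show ?thesis using C0 by simp
    qed
    then show ?thesis using c0 C0 by (intro exI[of _ "c0 / C"]) auto
  qed
qed



lemma lin_conv:
  fixes B :: "real^'n^'n" and \<zeta> :: "real^'n" and Z :: "real \<Rightarrow> real^'n"
  assumes N1: "hypN1 B" and zpos: "\<forall>i. \<zeta> $ i > 0"
    and ker: "(diagD B + transpose B) *v \<zeta> = 0"
    and der: "\<forall>t\<ge>0. (Z has_vector_derivative (diagD B + transpose B) *v Z t) (at t within {0..})"
    and zs: "\<forall>t\<ge>0. (\<Sum>i\<in>UNIV. Z t $ i) = 0"
  shows "(Z \<longlongrightarrow> 0) at_top"
proof -
  let ?A = "diagD B + transpose B"
  have diag: "\<forall>i. B $ i $ i = 0" using N1 by (simp add: hypN1_def)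
  obtain c where c: "c > 0" "\<And>z. (\<Sum>i\<in>UNIV. z$i) = 0 \<Longrightarrow> c * Vf \<zeta> z \<le> Qf B \<zeta> z"
    using Q_coercive[OF N1 zpos] by blast
  have dcomp: "((\<lambda>t. Z t $ i) has_real_derivative (?A *v Z t) $ i) (at t within {0..})"
    if "t \<ge> 0" for t i
    using bounded_linear.has_vector_derivative[OF bounded_linear_vec_nth der[rule_format, OF that]]
    by (simp add: has_real_derivative_iff_has_vector_derivative)
  define W where "W t = Vf \<zeta> (Z t)" for t
  have dW: "\<forall>t\<ge>0. (W has_real_derivative - Qf B \<zeta> (Z t)) (at t within {0..})"
  proof (intro allI impI)
    fix t :: real assume t: "t \<ge> 0"
    have "(W has_real_derivative (\<Sum>i\<in>UNIV. 2 * (Z t $ i * (?A *v Z t) $ i / \<zeta>$i))) (at t within {0..})"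
      unfolding W_def Vf_def
    proof (intro DERIV_sum)
      fix i
      show "((\<lambda>x. (Z x $ i)\<^sup>2 / \<zeta> $ i) has_real_derivative 2 * (Z t $ i * (?A *v Z t) $ i / \<zeta>$i))
            (at t within {0..})"
        using dcomp[OF t, of i] zpos[rule_format, of i] by (auto intro!: derivative_eq_intros)
    qed
    moreover have "(\<Sum>i\<in>UNIV. 2 * (Z t $ i * (?A *v Z t) $ i / \<zeta>$i)) = - Qf B \<zeta> (Z t)"
      using lyap_identity[OF diag zpos ker, of "Z t"] by (simp add: sum_distrib_left)
    ultimately show "(W has_real_derivative - Qf B \<zeta> (Z t)) (at t within {0..})" by simp
  qed
  have dh: "\<forall>t\<ge>0. ((\<lambda>t. exp (c * t) * W t) has_real_derivative
      exp (c * t) * (c * W t - Qf B \<zeta> (Z t))) (at t within {0..})"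
    using dW by (auto intro!: derivative_eq_intros simp: algebra_simps)
  have Wb: "W t \<le> W 0 * exp (- (c * t))" if t: "t \<ge> 0" for t
  proof -
    have "exp (c * t) * W t \<le> exp (c * 0) * W 0"
    proof (rule der_mono_le[OF dh order_refl t])
      fix s :: real assume "0 < s" "s < t"
      then have "c * W s \<le> Qf B \<zeta> (Z s)" using c(2) zs unfolding W_def by simp
      then show "exp (c * s) * (c * W s - Qf B \<zeta> (Z s)) \<le> 0"
        by (simp add: mult_nonneg_nonpos)
    qed
    then show ?thesis by (simp add: exp_minus field_simps)
  qed
  have comp: "(Z t $ i)^2 \<le> \<zeta>$i * (W 0 * exp (- (c * t)))" if t: "t \<ge> 0" for t i
  proof -
    have "(Z t $ i)^2 / \<zeta>$i \<le> W t"
      unfolding W_def Vf_def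
      by (rule member_le_sum[where f = "\<lambda>i. (Z t $ i)^2 / \<zeta>$i"]) (use zpos in \<open>auto intro: divide_nonneg_pos\<close>)
    then have "(Z t $ i)^2 \<le> \<zeta>$i * W t" using zpos[rule_format, of i] by (simp add: field_simps)
    also have "\<dots> \<le> \<zeta>$i * (W 0 * exp (- (c * t)))"
      using Wb[OF t] zpos[rule_format, of i] by (intro mult_left_mono) auto
    finally show ?thesis .
  qed
  show ?thesis
  proof (rule vec_tendstoI)
    fix i
    have lim0: "((\<lambda>t. \<zeta>$i * (W 0 * exp (- (c * t)))) \<longlongrightarrow> 0) at_top"
      using c(1) by real_asymp
    have "((\<lambda>t. (Z t $ i)^2) \<longlongrightarrow> 0) at_top"
    proof (rule tendsto_sandwich[OF _ _ tendsto_const lim0])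
      show "\<forall>\<^sub>F t in at_top. 0 \<le> (Z t $ i)^2" by simp
      show "\<forall>\<^sub>F t in at_top. (Z t $ i)^2 \<le> \<zeta>$i * (W 0 * exp (- (c * t)))"
        using comp unfolding eventually_at_top_linorder by (intro exI[of _ 0]) auto
    qed
    then have "((\<lambda>t. sqrt ((Z t $ i)^2)) \<longlongrightarrow> sqrt 0) at_top" by (rule tendsto_real_sqrt)
    then have "((\<lambda>t. \<bar>Z t $ i\<bar>) \<longlongrightarrow> 0) at_top" by simp
    then show "((\<lambda>t. Z t $ i) \<longlongrightarrow> 0 $ i) at_top" by (simp add: tendsto_rabs_zero_iff)
  qed
qed



lemma g_facts:
  fixes \<phi> :: "real \<Rightarrow> real" and \<Gamma> K \<delta> \<sigma> mbar :: real
  assumes params: "\<Gamma> > 0" "K > 0" "\<delta> > 0"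
    and spec: "(\<sigma> > 1 \<and> \<phi> = (\<lambda>m. \<Gamma> * (1 - (1 / K) * m powr (\<sigma> - 1)))
                   \<and> mbar = K powr (1 / (\<sigma> - 1)))
             \<or> (0 < \<sigma> \<and> \<sigma> < 1 \<and> \<phi> = (\<lambda>m. m powr (\<sigma> - 1) - \<delta>)
                   \<and> mbar = \<delta> powr (1 / (\<sigma> - 1)))
             \<or> (\<phi> = (\<lambda>m. \<Gamma> * (1 - (1 / K) * ln m)) \<and> mbar = exp K)"
  shows "mbar > 0 \<and> continuous_on {0<..} \<phi> \<and> (\<forall>m. 0 < m \<longrightarrow> m < mbar \<longrightarrow> \<phi> m > 0)
      \<and> (\<forall>m. mbar < m \<longrightarrow> \<phi> m < 0)"
  using spec
proof (elim disjE conjE)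
  assume s: "\<sigma> > 1" and ph: "\<phi> = (\<lambda>m. \<Gamma> * (1 - (1 / K) * m powr (\<sigma> - 1)))"
    and mb: "mbar = K powr (1 / (\<sigma> - 1))"
  have mbp: "mbar powr (\<sigma> - 1) = K" using s params by (simp add: mb powr_powr)
  have "\<phi> m > 0" if "0 < m" "m < mbar" for m
  proof -
    have "m powr (\<sigma> - 1) < K" using powr_less_mono2[of "\<sigma> - 1" m mbar] that s mbp by simp
    then show ?thesis using params unfolding ph by (simp add: field_simps)
  qed
  moreover have "\<phi> m < 0" if "mbar < m" for m
  proof -
    have "mbar > 0" using params by (simp add: mb)
    then have "K < m powr (\<sigma> - 1)" using powr_less_mono2[of "\<sigma> - 1" mbar m] that s mbp by simp
    then show ?thesis using params unfolding ph by (simp add: field_simps mult_pos_neg)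
  qed
  moreover have "continuous_on {0<..} \<phi>" unfolding ph by (intro continuous_intros) auto
  ultimately show ?thesis using params by (simp add: mb)
next
  assume s: "0 < \<sigma>" "\<sigma> < 1" and ph: "\<phi> = (\<lambda>m. m powr (\<sigma> - 1) - \<delta>)"
    and mb: "mbar = \<delta> powr (1 / (\<sigma> - 1))"
  have mbp: "mbar powr (\<sigma> - 1) = \<delta>" using s params by (simp add: mb powr_powr)
  have "\<phi> m > 0" if "0 < m" "m < mbar" for m
  proof -
    have "\<delta> < m powr (\<sigma> - 1)" using powr_less_mono2_neg[of "\<sigma> - 1" m mbar] that s mbp by simp
    then show ?thesis by (simp add: ph)
  qed
  moreover have "\<phi> m < 0" if "mbar < m" for m
  proof -
    have "mbar > 0" using params by (simp add: mb)
    then have "m powr (\<sigma> - 1) < \<delta>" using powr_less_mono2_neg[of "\<sigma> - 1" mbar m] that s mbp by simp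
    then show ?thesis by (simp add: ph)
  qed
  moreover have "continuous_on {0<..} \<phi>" unfolding ph by (intro continuous_intros) auto
  ultimately show ?thesis using params by (simp add: mb)
next
  assume ph: "\<phi> = (\<lambda>m. \<Gamma> * (1 - (1 / K) * ln m))" and mb: "mbar = exp K"
  have "\<phi> m > 0" if "0 < m" "m < mbar" for m
  proof -
    have "ln m < K" using that unfolding mb by (metis ln_exp ln_less_cancel_iff exp_gt_zero)
    then show ?thesis using params unfolding ph by (simp add: field_simps)
  qed
  moreover have "\<phi> m < 0" if "mbar < m" for m
  proof -
    have "K < ln m" using that unfolding mb by (metis ln_exp ln_less_cancel_iff exp_gt_zero less_trans)
    then show ?thesis using params unfolding ph by (simp add: field_simps mult_pos_neg)
  qed
  moreover have "continuous_on {0<..} \<phi>" unfolding ph by (intro continuous_intros) auto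
  ultimately show ?thesis using params by (simp add: mb)
qed



theorem mainTheorem3:
  fixes B :: "real^'n^'n" and \<zeta> x :: "real^'n" and X :: "real \<Rightarrow> real^'n"
    and \<phi> :: "real \<Rightarrow> real" and \<Gamma> K \<delta> \<sigma> mbar :: real
  assumes n2: "CARD('n) \<ge> 2"
    and N1: "hypN1 B"
    and zeta_pos: "\<forall>i. \<zeta> $ i > 0"
    and zeta_ker: "{v. (diagD B + transpose B) *v v = 0} = span {\<zeta>}"
    and params: "\<Gamma> > 0" "K > 0" "\<delta> > 0"
    and spec: "(\<sigma> > 1 \<and> \<phi> = (\<lambda>m. \<Gamma> * (1 - (1 / K) * m powr (\<sigma> - 1)))
                   \<and> mbar = K powr (1 / (\<sigma> - 1)))
             \<or> (0 < \<sigma> \<and> \<sigma> < 1 \<and> \<phi> = (\<lambda>m. m powr (\<sigma> - 1) - \<delta>)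
                   \<and> mbar = \<delta> powr (1 / (\<sigma> - 1)))
             \<or> (\<phi> = (\<lambda>m. \<Gamma> * (1 - (1 / K) * ln m)) \<and> mbar = exp K)"
    and x_nonneg: "\<forall>i. x $ i \<ge> 0" and x_ne: "x \<noteq> 0"
    and init: "X 0 = x"
    and ode: "\<forall>t\<ge>0. (X has_vector_derivative
                 (\<phi> (\<Sum>i\<in>UNIV. X t $ i) *\<^sub>R X t + (diagD B + transpose B) *v X t))
                 (at t within {0..})"
  shows "(X \<longlongrightarrow> (mbar / (\<Sum>i\<in>UNIV. \<zeta> $ i)) *\<^sub>R \<zeta>) at_top
         \<and> (\<Sum>i\<in>UNIV. ((mbar / (\<Sum>j\<in>UNIV. \<zeta> $ j)) *\<^sub>R \<zeta>) $ i) = mbar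
         \<and> (\<forall>i. ((mbar / (\<Sum>j\<in>UNIV. \<zeta> $ j)) *\<^sub>R \<zeta>) $ i \<ge> 0)"
proof -
  let ?A = "diagD B + transpose B"
  have diag: "\<forall>i. B $ i $ i = 0" using N1 by (simp add: hypN1_def)
  have ker: "?A *v \<zeta> = 0"
  proof -
    have "\<zeta> \<in> span {\<zeta>}" by (rule span_base) simp
    then show ?thesis using zeta_ker by blast
  qed
  have gf: "mbar > 0 \<and> continuous_on {0<..} \<phi> \<and> (\<forall>m. 0 < m \<longrightarrow> m < mbar \<longrightarrow> \<phi> m > 0)
      \<and> (\<forall>m. mbar < m \<longrightarrow> \<phi> m < 0)"
    by (rule g_facts[OF params spec])
  have mb: "mbar > 0" using gf by simp
  define S where "S = (\<Sum>i\<in>UNIV. \<zeta> $ i)"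
  have S0: "S > 0" unfolding S_def using zeta_pos by (intro sum_pos) auto
  define M where "M t = (\<Sum>i\<in>UNIV. X t $ i)" for t
  have dcomp: "((\<lambda>t. X t $ i) has_real_derivative (\<phi> (M t) *\<^sub>R X t + ?A *v X t) $ i) (at t within {0..})"
    if "t \<ge> 0" for t i
    using bounded_linear.has_vector_derivative[OF bounded_linear_vec_nth ode[rule_format, OF that]]
    by (simp add: has_real_derivative_iff_has_vector_derivative M_def)
  have dM: "\<forall>t\<ge>0. (M has_real_derivative (\<phi> (M t) * M t)) (at t within {0..})"
  proof (intro allI impI)
    fix t :: real assume t: "t \<ge> 0"
    have "(M has_real_derivative (\<Sum>i\<in>UNIV. (\<phi> (M t) *\<^sub>R X t + ?A *v X t) $ i)) (at t within {0..})"
    proof -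
      have Meq: "M = (\<lambda>s. \<Sum>i\<in>UNIV. X s $ i)" by (rule ext) (simp add: M_def)
      have "((\<lambda>s. \<Sum>i\<in>UNIV. X s $ i) has_real_derivative
         (\<Sum>i\<in>UNIV. (\<phi> (M t) *\<^sub>R X t + ?A *v X t) $ i)) (at t within {0..})"
        by (rule DERIV_sum) (rule dcomp[OF t])
      then show ?thesis by (subst Meq)
    qed
    moreover have "(\<Sum>i\<in>UNIV. (\<phi> (M t) *\<^sub>R X t + ?A *v X t) $ i) = \<phi> (M t) * M t"
      using colsum_zero[OF diag, of "X t"] by (simp add: sum.distrib M_def sum_distrib_left)
    ultimately show "(M has_real_derivative (\<phi> (M t) * M t)) (at t within {0..})" by simp
  qed
  have M0: "M 0 > 0"
  proof -
    have "M 0 \<ge> 0" using x_nonneg init by (simp add: M_def sum_nonneg)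
    moreover have "M 0 \<noteq> 0"
    proof
      assume "M 0 = 0"
      then have "\<forall>i\<in>UNIV. x $ i = 0" using x_nonneg init
        by (subst sum_nonneg_eq_0_iff[symmetric]) (auto simp: M_def)
      then show False using x_ne by (simp add: vec_eq_iff)
    qed
    ultimately show ?thesis by simp
  qed
  have gc: "continuous_on {0<..} (\<lambda>m. \<phi> m * m)"
    using gf by (intro continuous_intros) auto
  have sc: "(\<forall>t\<ge>0. M t > 0) \<and> (M \<longlongrightarrow> mbar) at_top"
  proof (rule scalar_conv[where g = "\<lambda>m. \<phi> m * m" and M = M and mbar = mbar, OF mb M0 gc])
    show "\<And>m. 0 < m \<Longrightarrow> m < mbar \<Longrightarrow> \<phi> m * m > 0" using gf by simp
    show "\<And>m. mbar < m \<Longrightarrow> \<phi> m * m < 0" using gf mb by (simp add: mult_neg_pos)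
  qed (use dM in simp)
  then have Mpos: "\<And>t. t \<ge> 0 \<Longrightarrow> M t > 0" and Mlim: "(M \<longlongrightarrow> mbar) at_top" by auto
  define p where "p = (1 / S) *\<^sub>R \<zeta>"
  have Ap: "?A *v p = 0" by (simp add: p_def matrix_vector_mult_scaleR ker)
  define P where "P t = (1 / M t) *\<^sub>R X t" for t
  define Z where "Z t = P t - p" for t
  have dZ: "\<forall>t\<ge>0. (Z has_vector_derivative ?A *v Z t) (at t within {0..})"
  proof (intro allI impI)
    fix t :: real assume t: "t \<ge> 0"
    have Mt: "M t \<noteq> 0" using Mpos[OF t] by simp
    have dinv: "((\<lambda>t. 1 / M t) has_real_derivative - (\<phi> (M t) * M t) / (M t)^2) (at t within {0..})"
      using dM[rule_format, OF t] Mt by (auto intro!: derivative_eq_intros simp: power2_eq_square)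
    have "(Z has_vector_derivative
       ((1 / M t) *\<^sub>R (\<phi> (M t) *\<^sub>R X t + ?A *v X t) + (- (\<phi> (M t) * M t) / (M t)^2) *\<^sub>R X t - 0))
       (at t within {0..})"
      unfolding Z_def[abs_def] P_def[abs_def]
      by (intro derivative_intros has_vector_derivative_scaleR dinv ode[rule_format, OF t, folded M_def])
    moreover have "(1 / M t) *\<^sub>R (\<phi> (M t) *\<^sub>R X t + ?A *v X t) + (- (\<phi> (M t) * M t) / (M t)^2) *\<^sub>R X t - 0
        = ?A *v Z t"
      using Mt by (simp add: Z_def P_def matrix_vector_mult_diff_distrib Ap matrix_vector_mult_scaleR
          scaleR_add_right power2_eq_square)
    ultimately show "(Z has_vector_derivative ?A *v Z t) (at t within {0..})" by simp
  qed
  have zs: "\<forall>t\<ge>0. (\<Sum>i\<in>UNIV. Z t $ i) = 0"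
  proof (intro allI impI)
    fix t :: real assume t: "t \<ge> 0"
    have "(\<Sum>i\<in>UNIV. P t $ i) = 1" using Mpos[OF t]
      by (simp add: P_def M_def sum_divide_distrib[symmetric])
    moreover have "(\<Sum>i\<in>UNIV. p $ i) = 1" using S0
      by (simp add: p_def S_def sum_distrib_left[symmetric] sum_divide_distrib[symmetric])
    ultimately show "(\<Sum>i\<in>UNIV. Z t $ i) = 0" by (simp add: Z_def sum_subtractf)
  qed
  have Zlim: "(Z \<longlongrightarrow> 0) at_top" by (rule lin_conv[OF N1 zeta_pos ker dZ zs])
  have Plim: "(P \<longlongrightarrow> p) at_top"
  proof -
    have "((\<lambda>t. Z t + p) \<longlongrightarrow> 0 + p) at_top" by (intro tendsto_intros Zlim)
    then show ?thesis by (simp add: Z_def)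
  qed
  have "((\<lambda>t. M t *\<^sub>R P t) \<longlongrightarrow> mbar *\<^sub>R p) at_top" by (intro tendsto_intros Mlim Plim)
  moreover have "\<forall>\<^sub>F t in at_top. M t *\<^sub>R P t = X t"
    unfolding eventually_at_top_linorder using Mpos
    by (intro exI[of _ 0]) (auto simp: P_def dest: less_imp_neq[symmetric])
  ultimately have "(X \<longlongrightarrow> mbar *\<^sub>R p) at_top" by (rule Lim_transform_eventually)
  moreover have "mbar *\<^sub>R p = (mbar / S) *\<^sub>R \<zeta>" by (simp add: p_def)
  moreover have "(\<Sum>i\<in>UNIV. ((mbar / S) *\<^sub>R \<zeta>) $ i) = mbar"
    using S0 by (simp add: S_def sum_distrib_left[symmetric] sum_divide_distrib[symmetric])
  moreover have "\<forall>i. ((mbar / S) *\<^sub>R \<zeta>) $ i \<ge> 0"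
    using S0 mb zeta_pos by (auto intro!: mult_nonneg_nonneg less_imp_le)
  ultimately show ?thesis by (simp add: S_def)
qed

end
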